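(* For every $v\equiv 0\pmod 4$ with $v\geq 12$ there exists a connected symmetric configuration $v_3$ with strong chromatic number exactly 5.
   Context: A symmetric configuration $v_3$ consists of a set of $v$ points and a collection of $v$ blocks, each block being a 3-element subset of the points, such that every point lies in exactly 3 blocks and any two distinct points lie in at most one common block; it is connected if it is not the union of two configurations on disjoint nonempty point sets. A strong colouring is an assignment of colours to points such that the three points of every block receive three distinct colours; the strong chromatic number is the minimum number of colours in a strong colouring. *)

theory Defs
  imports Main
begin

definition sym_config3 :: "'a set \<Rightarrow> 'a set set \<Rightarrow> nat \<Rightarrow> bool" where
  "sym_config3 P B v \<longleftrightarrow>
     finite P \<and> card P = v \<and> card B = v \<and>
     (\<forall>b\<in>B. b \<subseteq> P \<and> card b = 3) \<and>
     (\<forall>x\<in>P. card {b\<in>B. x \<in> b} = 3) \<and>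
     (\<forall>x\<in>P. \<forall>y\<in>P. x \<noteq> y \<longrightarrow> card {b\<in>B. x \<in> b \<and> y \<in> b} \<le> 1)"

definition config_connected :: "'a set \<Rightarrow> 'a set set \<Rightarrow> bool" where
  "config_connected P B \<longleftrightarrow>
     \<not> (\<exists>P1 P2. P1 \<noteq> {} \<and> P2 \<noteq> {} \<and> P1 \<inter> P2 = {} \<and> P1 \<union> P2 = P \<and>
            (\<forall>b\<in>B. b \<subseteq> P1 \<or> b \<subseteq> P2))"

definition strong_colouring :: "'a set \<Rightarrow> 'a set set \<Rightarrow> nat \<Rightarrow> ('a \<Rightarrow> nat) \<Rightarrow> bool" where
  "strong_colouring P B k c \<longleftrightarrow>
     (\<forall>x\<in>P. c x < k) \<and> (\<forall>b\<in>B. inj_on c b)"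

definition strong_chromatic_number :: "'a set \<Rightarrow> 'a set set \<Rightarrow> nat" where
  "strong_chromatic_number P B = (LEAST k. \<exists>c. strong_colouring P B k c)"

end

theory Submission
  imports Defs
begin

definition nb :: "nat \<Rightarrow> nat set" where
  "nb i = (if i=0 then {0,1,7} else if i=1 then {1,3,4} else if i=2 then {2,3,5} else
     if i=3 then {2,4,6} else if i=4 then {3,6,7} else if i=5 then {4,5,8} else {5,6,9})"

definition fv :: "nat \<Rightarrow> nat \<Rightarrow> nat set" where
  "fv n i = (if i<7 then nb i else if i \<le> n+8 then {i,i+1,i+3} else if i = n+9 then {n+9,n+10,0}
     else if i = n+10 then {n+10,n+11,1} else {n+11,0,2})"

definition T :: "nat \<Rightarrow> nat \<Rightarrow> nat set" where
  "T n x = (if x=0 then {0,n+11,n+9} else if x=1 then {0,1,n+10} else if x=2 then {2,3,n+11} else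
    if x=3 then {1,2,4} else if x=4 then {1,3,5} else if x=5 then {2,5,6} else if x=6 then {3,4,6}
    else if x=7 then {0,4,7} else if x=8 then {5,7,8} else if x=9 then {6,8,9} else {x-3,x-1,x})"

lemma lt7: "(i::nat) < 7 \<Longrightarrow> i=0 \<or> i=1 \<or> i=2 \<or> i=3 \<or> i=4 \<or> i=5 \<or> i=6" by auto
lemma lt10: "(i::nat) < 10 \<Longrightarrow> i=0 \<or> i=1 \<or> i=2 \<or> i=3 \<or> i=4 \<or> i=5 \<or> i=6 \<or> i=7 \<or> i=8 \<or> i=9" by auto

lemma kinds: assumes "(i::nat) < n + 12"
  obtains "i < 7" | "7 \<le> i" "i \<le> n+8" | "i = n+9" | "i = n+10" | "i = n+11"
  using assms by linarith

lemma fvN: "i < 7 \<Longrightarrow> fv n i = nb i" by (simp add: fv_def)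
lemma fvG: "7 \<le> i \<Longrightarrow> i \<le> n+8 \<Longrightarrow> fv n i = {i,i+1,i+3}" by (simp add: fv_def)
lemma fvW0: "fv n (n+9) = {n+9,n+10,0}" by (simp add: fv_def)
lemma fvW1: "fv n (n+10) = {n+10,n+11,1}" by (simp add: fv_def)
lemma fvW2: "fv n (n+11) = {n+11,0,2}" by (simp add: fv_def)

lemma T_ge10: "10 \<le> x \<Longrightarrow> T n x = {x-3,x-1,x}" by (simp add: T_def)

lemma CH1: assumes "i < n+12" "x \<in> fv n i" shows "i \<in> T n x"
  using assms(1)
proof (cases rule: kinds)
  case 1 then show ?thesis using assms(2) lt7[OF 1] by (auto simp: fvN nb_def T_def)
next
  case 2
  then have x: "x = i \<or> x = i+1 \<or> x = i+3" using assms(2) by (simp add: fvG)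
  show ?thesis
  proof (cases "10 \<le> x")
    case True then show ?thesis using x by (auto simp: T_ge10)
  next
    case False
    then have "(i = 7 \<and> (x = 7 \<or> x = 8)) \<or> (i = 8 \<and> (x = 8 \<or> x = 9)) \<or> (i=9 \<and> x = 9)"
      using x 2 by linarith
    then show ?thesis by (auto simp: T_def)
  qed
next
  case 3
  then have "x = n+9 \<or> x = n+10 \<or> x = 0" using assms(2) by (simp add: fvW0)
  moreover have "n+9 \<in> T n (n+9)" by (cases n) (simp_all add: T_def)
  moreover have "n+9 \<in> T n (n+10)" by (simp add: T_ge10)
  moreover have "n+9 \<in> T n 0" by (simp add: T_def)
  ultimately show ?thesis using 3 by auto
next
  case 4
  then have "x = n+10 \<or> x = n+11 \<or> x = 1" using assms(2) by (simp add: fvW1)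
  moreover have "n+10 \<in> T n (n+10)" by (simp add: T_ge10)
  moreover have "n+10 \<in> T n (n+11)" by (simp add: T_ge10)
  moreover have "n+10 \<in> T n 1" by (simp add: T_def)
  ultimately show ?thesis using 4 by auto
next
  case 5
  then have "x = n+11 \<or> x = 0 \<or> x = 2" using assms(2) by (simp add: fvW2)
  moreover have "n+11 \<in> T n (n+11)" by (simp add: T_ge10)
  moreover have "n+11 \<in> T n 0" by (simp add: T_def)
  moreover have "n+11 \<in> T n 2" by (simp add: T_def)
  ultimately show ?thesis using 5 by auto
qed

lemma fv_self: assumes "i < n+12" "7 \<le> i" shows "i \<in> fv n i"
proof -
  have "i \<le> n+8 \<or> i = n+9 \<or> i = n+10 \<or> i = n+11" using assms by linarith
  then show ?thesis using assms(2) by (elim disjE) (simp_all add: fvG fvW0 fvW1 fvW2)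
qed
lemma fv_succ: assumes "7 \<le> i" "i \<le> n+10" shows "i+1 \<in> fv n i"
proof -
  have "i \<le> n+8 \<or> i = n+9 \<or> i = n+10" using assms by linarith
  then show ?thesis using assms(1) by (elim disjE) (simp_all add: fvG fvW0 fvW1)
qed
lemma fv_3: "7 \<le> i \<Longrightarrow> i \<le> n+8 \<Longrightarrow> i+3 \<in> fv n i"
  by (simp add: fvG)

lemma f9: "9 \<in> fv n 9" by (cases n) (simp_all add: fv_def)
lemma f7: "fv n 7 = {7,8,10}" by (simp add: fv_def)
lemma f8: "fv n 8 = {8,9,11}" by (simp add: fv_def)
lemma T0: "T n 0 = {0, n+11, n+9}" by (simp add: T_def)
lemma CH2_0: "i \<in> T n 0 \<Longrightarrow> i < n+12 \<and> 0 \<in> fv n i"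
  unfolding T0 by (elim insertE emptyE; simp add: fvN nb_def fvW0 fvW1 fvW2 f7 f8 f9)
lemma Tc0: "card (T n 0) = 3" unfolding T0 by simp
lemma T1: "T n 1 = {0, 1, n+10}" by (simp add: T_def)
lemma CH2_1: "i \<in> T n 1 \<Longrightarrow> i < n+12 \<and> 1 \<in> fv n i"
  unfolding T1 by (elim insertE emptyE; simp add: fvN nb_def fvW0 fvW1 fvW2 f7 f8 f9)
lemma Tc1: "card (T n 1) = 3" unfolding T1 by simp
lemma T2: "T n 2 = {2, 3, n+11}" by (simp add: T_def)
lemma CH2_2: "i \<in> T n 2 \<Longrightarrow> i < n+12 \<and> 2 \<in> fv n i"
  unfolding T2 by (elim insertE emptyE; simp add: fvN nb_def fvW0 fvW1 fvW2 f7 f8 f9)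
lemma Tc2: "card (T n 2) = 3" unfolding T2 by simp
lemma T3: "T n 3 = {1, 2, 4}" by (simp add: T_def)
lemma CH2_3: "i \<in> T n 3 \<Longrightarrow> i < n+12 \<and> 3 \<in> fv n i"
  unfolding T3 by (elim insertE emptyE; simp add: fvN nb_def fvW0 fvW1 fvW2 f7 f8 f9)
lemma Tc3: "card (T n 3) = 3" unfolding T3 by simp
lemma T4: "T n 4 = {1, 3, 5}" by (simp add: T_def)
lemma CH2_4: "i \<in> T n 4 \<Longrightarrow> i < n+12 \<and> 4 \<in> fv n i"
  unfolding T4 by (elim insertE emptyE; simp add: fvN nb_def fvW0 fvW1 fvW2 f7 f8 f9)
lemma Tc4: "card (T n 4) = 3" unfolding T4 by simp
lemma T5: "T n 5 = {2, 5, 6}" by (simp add: T_def)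
lemma CH2_5: "i \<in> T n 5 \<Longrightarrow> i < n+12 \<and> 5 \<in> fv n i"
  unfolding T5 by (elim insertE emptyE; simp add: fvN nb_def fvW0 fvW1 fvW2 f7 f8 f9)
lemma Tc5: "card (T n 5) = 3" unfolding T5 by simp
lemma T6: "T n 6 = {3, 4, 6}" by (simp add: T_def)
lemma CH2_6: "i \<in> T n 6 \<Longrightarrow> i < n+12 \<and> 6 \<in> fv n i"
  unfolding T6 by (elim insertE emptyE; simp add: fvN nb_def fvW0 fvW1 fvW2 f7 f8 f9)
lemma Tc6: "card (T n 6) = 3" unfolding T6 by simp
lemma T7: "T n 7 = {0, 4, 7}" by (simp add: T_def)
lemma CH2_7: "i \<in> T n 7 \<Longrightarrow> i < n+12 \<and> 7 \<in> fv n i"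
  unfolding T7 by (elim insertE emptyE; simp add: fvN nb_def fvW0 fvW1 fvW2 f7 f8 f9)
lemma Tc7: "card (T n 7) = 3" unfolding T7 by simp
lemma T8: "T n 8 = {5, 7, 8}" by (simp add: T_def)
lemma CH2_8: "i \<in> T n 8 \<Longrightarrow> i < n+12 \<and> 8 \<in> fv n i"
  unfolding T8 by (elim insertE emptyE; simp add: fvN nb_def fvW0 fvW1 fvW2 f7 f8 f9)
lemma Tc8: "card (T n 8) = 3" unfolding T8 by simp
lemma T9: "T n 9 = {6, 8, 9}" by (simp add: T_def)
lemma CH2_9: "i \<in> T n 9 \<Longrightarrow> i < n+12 \<and> 9 \<in> fv n i"
  unfolding T9 by (elim insertE emptyE; simp add: fvN nb_def fvW0 fvW1 fvW2 f7 f8 f9)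
lemma Tc9: "card (T n 9) = 3" unfolding T9 by simp

lemma CH2: assumes "x < n+12" "i \<in> T n x" shows "i < n+12 \<and> x \<in> fv n i"
proof (cases "10 \<le> x")
  case True
  then have "i = x-3 \<or> i = x-1 \<or> i = x" using assms(2) by (simp add: T_ge10)
  then show ?thesis
  proof (elim disjE)
    assume "i = x-3" then show ?thesis using fv_3[of "x-3" n] True assms(1) by simp
  next
    assume "i = x-1" then show ?thesis using fv_succ[of "x-1" n] True assms(1) by simp
  next
    assume "i = x" then show ?thesis using fv_self[of x n] True assms(1) by simp
  qed
next
  case False
  then have x: "x=0 \<or> x=1 \<or> x=2 \<or> x=3 \<or> x=4 \<or> x=5 \<or> x=6 \<or> x=7 \<or> x=8 \<or> x=9" by auto
  then show ?thesis using assms(2)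
    by (elim disjE; simp only:; metis CH2_0 CH2_1 CH2_2 CH2_3 CH2_4 CH2_5 CH2_6 CH2_7 CH2_8 CH2_9)
qed

lemma T_eq: assumes x: "x < n+12" shows "{i \<in> {0..<n+12}. x \<in> fv n i} = T n x"
proof (rule set_eqI)
  fix i
  show "i \<in> {i \<in> {0..<n+12}. x \<in> fv n i} \<longleftrightarrow> i \<in> T n x"
  proof
    assume "i \<in> {i \<in> {0..<n+12}. x \<in> fv n i}"
    then show "i \<in> T n x" using CH1[of i n x] by simp
  next
    assume "i \<in> T n x"
    then show "i \<in> {i \<in> {0..<n+12}. x \<in> fv n i}" using CH2[OF x] by simp
  qed
qed

lemma T_card: "x < n+12 \<Longrightarrow> card (T n x) = 3"
proof (cases "10 \<le> x")
  case True
  then have "x-3 \<noteq> x-1" "x-3 \<noteq> x" "x-1 \<noteq> x" by arith+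
  then show ?thesis using True by (simp add: T_ge10)
next
  case False
  then have x: "x=0 \<or> x=1 \<or> x=2 \<or> x=3 \<or> x=4 \<or> x=5 \<or> x=6 \<or> x=7 \<or> x=8 \<or> x=9" by auto
  then show ?thesis by (elim disjE; simp only: Tc0 Tc1 Tc2 Tc3 Tc4 Tc5 Tc6 Tc7 Tc8 Tc9)
qed

lemma T_mem10: "10 \<le> x \<Longrightarrow> i \<in> T n x \<longleftrightarrow> (i+3 = x \<or> i+1 = x \<or> i = x)"
  by (auto simp: T_ge10)

lemma PT_big: assumes "10 \<le> x" "10 \<le> y" "x \<noteq> y" "i \<in> T n x" "i \<in> T n y" "j \<in> T n x" "j \<in> T n y"
  shows "i = j"
  using assms(4-7) unfolding T_mem10[OF assms(1)] T_mem10[OF assms(2)]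
  by (elim disjE; use assms(3) in linarith)
lemma PT_mix0: assumes "10 \<le> y" "y < n+12" "i \<in> T n 0" "i \<in> T n y" "j \<in> T n 0" "j \<in> T n y"
  shows "i = j"
  using assms(3-6) unfolding T_mem10[OF assms(1)] T0
  by (elim insertE emptyE disjE; use assms(1,2) in linarith)
lemma PT_mix1: assumes "10 \<le> y" "y < n+12" "i \<in> T n 1" "i \<in> T n y" "j \<in> T n 1" "j \<in> T n y"
  shows "i = j"
  using assms(3-6) unfolding T_mem10[OF assms(1)] T1
  by (elim insertE emptyE disjE; use assms(1,2) in linarith)
lemma PT_mix2: assumes "10 \<le> y" "y < n+12" "i \<in> T n 2" "i \<in> T n y" "j \<in> T n 2" "j \<in> T n y"
  shows "i = j"
  using assms(3-6) unfolding T_mem10[OF assms(1)] T2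
  by (elim insertE emptyE disjE; use assms(1,2) in linarith)
lemma PT_mix3: assumes "10 \<le> y" "y < n+12" "i \<in> T n 3" "i \<in> T n y" "j \<in> T n 3" "j \<in> T n y"
  shows "i = j"
  using assms(3-6) unfolding T_mem10[OF assms(1)] T3
  by (elim insertE emptyE disjE; use assms(1,2) in linarith)
lemma PT_mix4: assumes "10 \<le> y" "y < n+12" "i \<in> T n 4" "i \<in> T n y" "j \<in> T n 4" "j \<in> T n y"
  shows "i = j"
  using assms(3-6) unfolding T_mem10[OF assms(1)] T4
  by (elim insertE emptyE disjE; use assms(1,2) in linarith)
lemma PT_mix5: assumes "10 \<le> y" "y < n+12" "i \<in> T n 5" "i \<in> T n y" "j \<in> T n 5" "j \<in> T n y"
  shows "i = j"
  using assms(3-6) unfolding T_mem10[OF assms(1)] T5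
  by (elim insertE emptyE disjE; use assms(1,2) in linarith)
lemma PT_mix6: assumes "10 \<le> y" "y < n+12" "i \<in> T n 6" "i \<in> T n y" "j \<in> T n 6" "j \<in> T n y"
  shows "i = j"
  using assms(3-6) unfolding T_mem10[OF assms(1)] T6
  by (elim insertE emptyE disjE; use assms(1,2) in linarith)
lemma PT_mix7: assumes "10 \<le> y" "y < n+12" "i \<in> T n 7" "i \<in> T n y" "j \<in> T n 7" "j \<in> T n y"
  shows "i = j"
  using assms(3-6) unfolding T_mem10[OF assms(1)] T7
  by (elim insertE emptyE disjE; use assms(1,2) in linarith)
lemma PT_mix8: assumes "10 \<le> y" "y < n+12" "i \<in> T n 8" "i \<in> T n y" "j \<in> T n 8" "j \<in> T n y"
  shows "i = j"
  using assms(3-6) unfolding T_mem10[OF assms(1)] T8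
  by (elim insertE emptyE disjE; use assms(1,2) in linarith)
lemma PT_mix9: assumes "10 \<le> y" "y < n+12" "i \<in> T n 9" "i \<in> T n y" "j \<in> T n 9" "j \<in> T n y"
  shows "i = j"
  using assms(3-6) unfolding T_mem10[OF assms(1)] T9
  by (elim insertE emptyE disjE; use assms(1,2) in linarith)

lemma card_sing_Int: "card ({a} \<inter> B) \<le> Suc 0"
  by (simp add: Int_insert_left)
lemma PS_0_1: "card (T n 0 \<inter> T n 1) \<le> 1" unfolding T0 T1 by (simp add: card_sing_Int)
lemma PS_0_2: "card (T n 0 \<inter> T n 2) \<le> 1" unfolding T0 T2 by (simp add: card_sing_Int)
lemma PS_0_3: "card (T n 0 \<inter> T n 3) \<le> 1" unfolding T0 T3 by (simp add: card_sing_Int)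
lemma PS_0_4: "card (T n 0 \<inter> T n 4) \<le> 1" unfolding T0 T4 by (simp add: card_sing_Int)
lemma PS_0_5: "card (T n 0 \<inter> T n 5) \<le> 1" unfolding T0 T5 by (simp add: card_sing_Int)
lemma PS_0_6: "card (T n 0 \<inter> T n 6) \<le> 1" unfolding T0 T6 by (simp add: card_sing_Int)
lemma PS_0_7: "card (T n 0 \<inter> T n 7) \<le> 1" unfolding T0 T7 by (simp add: card_sing_Int)
lemma PS_0_8: "card (T n 0 \<inter> T n 8) \<le> 1" unfolding T0 T8 by (simp add: card_sing_Int)
lemma PS_0_9: "card (T n 0 \<inter> T n 9) \<le> 1" unfolding T0 T9 by (simp add: card_sing_Int)
lemma PS_1_0: "card (T n 1 \<inter> T n 0) \<le> 1" unfolding T1 T0 by (simp add: card_sing_Int)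
lemma PS_1_2: "card (T n 1 \<inter> T n 2) \<le> 1" unfolding T1 T2 by (simp add: card_sing_Int)
lemma PS_1_3: "card (T n 1 \<inter> T n 3) \<le> 1" unfolding T1 T3 by (simp add: card_sing_Int)
lemma PS_1_4: "card (T n 1 \<inter> T n 4) \<le> 1" unfolding T1 T4 by (simp add: card_sing_Int)
lemma PS_1_5: "card (T n 1 \<inter> T n 5) \<le> 1" unfolding T1 T5 by (simp add: card_sing_Int)
lemma PS_1_6: "card (T n 1 \<inter> T n 6) \<le> 1" unfolding T1 T6 by (simp add: card_sing_Int)
lemma PS_1_7: "card (T n 1 \<inter> T n 7) \<le> 1" unfolding T1 T7 by (simp add: card_sing_Int)
lemma PS_1_8: "card (T n 1 \<inter> T n 8) \<le> 1" unfolding T1 T8 by (simp add: card_sing_Int)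
lemma PS_1_9: "card (T n 1 \<inter> T n 9) \<le> 1" unfolding T1 T9 by (simp add: card_sing_Int)
lemma PS_2_0: "card (T n 2 \<inter> T n 0) \<le> 1" unfolding T2 T0 by (simp add: card_sing_Int)
lemma PS_2_1: "card (T n 2 \<inter> T n 1) \<le> 1" unfolding T2 T1 by (simp add: card_sing_Int)
lemma PS_2_3: "card (T n 2 \<inter> T n 3) \<le> 1" unfolding T2 T3 by (simp add: card_sing_Int)
lemma PS_2_4: "card (T n 2 \<inter> T n 4) \<le> 1" unfolding T2 T4 by (simp add: card_sing_Int)
lemma PS_2_5: "card (T n 2 \<inter> T n 5) \<le> 1" unfolding T2 T5 by (simp add: card_sing_Int)
lemma PS_2_6: "card (T n 2 \<inter> T n 6) \<le> 1" unfolding T2 T6 by (simp add: card_sing_Int)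
lemma PS_2_7: "card (T n 2 \<inter> T n 7) \<le> 1" unfolding T2 T7 by (simp add: card_sing_Int)
lemma PS_2_8: "card (T n 2 \<inter> T n 8) \<le> 1" unfolding T2 T8 by (simp add: card_sing_Int)
lemma PS_2_9: "card (T n 2 \<inter> T n 9) \<le> 1" unfolding T2 T9 by (simp add: card_sing_Int)
lemma PS_3_0: "card (T n 3 \<inter> T n 0) \<le> 1" unfolding T3 T0 by (simp add: card_sing_Int)
lemma PS_3_1: "card (T n 3 \<inter> T n 1) \<le> 1" unfolding T3 T1 by (simp add: card_sing_Int)
lemma PS_3_2: "card (T n 3 \<inter> T n 2) \<le> 1" unfolding T3 T2 by (simp add: card_sing_Int)
lemma PS_3_4: "card (T n 3 \<inter> T n 4) \<le> 1" unfolding T3 T4 by (simp add: card_sing_Int)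
lemma PS_3_5: "card (T n 3 \<inter> T n 5) \<le> 1" unfolding T3 T5 by (simp add: card_sing_Int)
lemma PS_3_6: "card (T n 3 \<inter> T n 6) \<le> 1" unfolding T3 T6 by (simp add: card_sing_Int)
lemma PS_3_7: "card (T n 3 \<inter> T n 7) \<le> 1" unfolding T3 T7 by (simp add: card_sing_Int)
lemma PS_3_8: "card (T n 3 \<inter> T n 8) \<le> 1" unfolding T3 T8 by (simp add: card_sing_Int)
lemma PS_3_9: "card (T n 3 \<inter> T n 9) \<le> 1" unfolding T3 T9 by (simp add: card_sing_Int)
lemma PS_4_0: "card (T n 4 \<inter> T n 0) \<le> 1" unfolding T4 T0 by (simp add: card_sing_Int)
lemma PS_4_1: "card (T n 4 \<inter> T n 1) \<le> 1" unfolding T4 T1 by (simp add: card_sing_Int)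
lemma PS_4_2: "card (T n 4 \<inter> T n 2) \<le> 1" unfolding T4 T2 by (simp add: card_sing_Int)
lemma PS_4_3: "card (T n 4 \<inter> T n 3) \<le> 1" unfolding T4 T3 by (simp add: card_sing_Int)
lemma PS_4_5: "card (T n 4 \<inter> T n 5) \<le> 1" unfolding T4 T5 by (simp add: card_sing_Int)
lemma PS_4_6: "card (T n 4 \<inter> T n 6) \<le> 1" unfolding T4 T6 by (simp add: card_sing_Int)
lemma PS_4_7: "card (T n 4 \<inter> T n 7) \<le> 1" unfolding T4 T7 by (simp add: card_sing_Int)
lemma PS_4_8: "card (T n 4 \<inter> T n 8) \<le> 1" unfolding T4 T8 by (simp add: card_sing_Int)
lemma PS_4_9: "card (T n 4 \<inter> T n 9) \<le> 1" unfolding T4 T9 by (simp add: card_sing_Int)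
lemma PS_5_0: "card (T n 5 \<inter> T n 0) \<le> 1" unfolding T5 T0 by (simp add: card_sing_Int)
lemma PS_5_1: "card (T n 5 \<inter> T n 1) \<le> 1" unfolding T5 T1 by (simp add: card_sing_Int)
lemma PS_5_2: "card (T n 5 \<inter> T n 2) \<le> 1" unfolding T5 T2 by (simp add: card_sing_Int)
lemma PS_5_3: "card (T n 5 \<inter> T n 3) \<le> 1" unfolding T5 T3 by (simp add: card_sing_Int)
lemma PS_5_4: "card (T n 5 \<inter> T n 4) \<le> 1" unfolding T5 T4 by (simp add: card_sing_Int)
lemma PS_5_6: "card (T n 5 \<inter> T n 6) \<le> 1" unfolding T5 T6 by (simp add: card_sing_Int)
lemma PS_5_7: "card (T n 5 \<inter> T n 7) \<le> 1" unfolding T5 T7 by (simp add: card_sing_Int)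
lemma PS_5_8: "card (T n 5 \<inter> T n 8) \<le> 1" unfolding T5 T8 by (simp add: card_sing_Int)
lemma PS_5_9: "card (T n 5 \<inter> T n 9) \<le> 1" unfolding T5 T9 by (simp add: card_sing_Int)
lemma PS_6_0: "card (T n 6 \<inter> T n 0) \<le> 1" unfolding T6 T0 by (simp add: card_sing_Int)
lemma PS_6_1: "card (T n 6 \<inter> T n 1) \<le> 1" unfolding T6 T1 by (simp add: card_sing_Int)
lemma PS_6_2: "card (T n 6 \<inter> T n 2) \<le> 1" unfolding T6 T2 by (simp add: card_sing_Int)
lemma PS_6_3: "card (T n 6 \<inter> T n 3) \<le> 1" unfolding T6 T3 by (simp add: card_sing_Int)
lemma PS_6_4: "card (T n 6 \<inter> T n 4) \<le> 1" unfolding T6 T4 by (simp add: card_sing_Int)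
lemma PS_6_5: "card (T n 6 \<inter> T n 5) \<le> 1" unfolding T6 T5 by (simp add: card_sing_Int)
lemma PS_6_7: "card (T n 6 \<inter> T n 7) \<le> 1" unfolding T6 T7 by (simp add: card_sing_Int)
lemma PS_6_8: "card (T n 6 \<inter> T n 8) \<le> 1" unfolding T6 T8 by (simp add: card_sing_Int)
lemma PS_6_9: "card (T n 6 \<inter> T n 9) \<le> 1" unfolding T6 T9 by (simp add: card_sing_Int)
lemma PS_7_0: "card (T n 7 \<inter> T n 0) \<le> 1" unfolding T7 T0 by (simp add: card_sing_Int)
lemma PS_7_1: "card (T n 7 \<inter> T n 1) \<le> 1" unfolding T7 T1 by (simp add: card_sing_Int)
lemma PS_7_2: "card (T n 7 \<inter> T n 2) \<le> 1" unfolding T7 T2 by (simp add: card_sing_Int)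
lemma PS_7_3: "card (T n 7 \<inter> T n 3) \<le> 1" unfolding T7 T3 by (simp add: card_sing_Int)
lemma PS_7_4: "card (T n 7 \<inter> T n 4) \<le> 1" unfolding T7 T4 by (simp add: card_sing_Int)
lemma PS_7_5: "card (T n 7 \<inter> T n 5) \<le> 1" unfolding T7 T5 by (simp add: card_sing_Int)
lemma PS_7_6: "card (T n 7 \<inter> T n 6) \<le> 1" unfolding T7 T6 by (simp add: card_sing_Int)
lemma PS_7_8: "card (T n 7 \<inter> T n 8) \<le> 1" unfolding T7 T8 by (simp add: card_sing_Int)
lemma PS_7_9: "card (T n 7 \<inter> T n 9) \<le> 1" unfolding T7 T9 by (simp add: card_sing_Int)
lemma PS_8_0: "card (T n 8 \<inter> T n 0) \<le> 1" unfolding T8 T0 by (simp add: card_sing_Int)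
lemma PS_8_1: "card (T n 8 \<inter> T n 1) \<le> 1" unfolding T8 T1 by (simp add: card_sing_Int)
lemma PS_8_2: "card (T n 8 \<inter> T n 2) \<le> 1" unfolding T8 T2 by (simp add: card_sing_Int)
lemma PS_8_3: "card (T n 8 \<inter> T n 3) \<le> 1" unfolding T8 T3 by (simp add: card_sing_Int)
lemma PS_8_4: "card (T n 8 \<inter> T n 4) \<le> 1" unfolding T8 T4 by (simp add: card_sing_Int)
lemma PS_8_5: "card (T n 8 \<inter> T n 5) \<le> 1" unfolding T8 T5 by (simp add: card_sing_Int)
lemma PS_8_6: "card (T n 8 \<inter> T n 6) \<le> 1" unfolding T8 T6 by (simp add: card_sing_Int)
lemma PS_8_7: "card (T n 8 \<inter> T n 7) \<le> 1" unfolding T8 T7 by (simp add: card_sing_Int)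
lemma PS_8_9: "card (T n 8 \<inter> T n 9) \<le> 1" unfolding T8 T9 by (simp add: card_sing_Int)
lemma PS_9_0: "card (T n 9 \<inter> T n 0) \<le> 1" unfolding T9 T0 by (simp add: card_sing_Int)
lemma PS_9_1: "card (T n 9 \<inter> T n 1) \<le> 1" unfolding T9 T1 by (simp add: card_sing_Int)
lemma PS_9_2: "card (T n 9 \<inter> T n 2) \<le> 1" unfolding T9 T2 by (simp add: card_sing_Int)
lemma PS_9_3: "card (T n 9 \<inter> T n 3) \<le> 1" unfolding T9 T3 by (simp add: card_sing_Int)
lemma PS_9_4: "card (T n 9 \<inter> T n 4) \<le> 1" unfolding T9 T4 by (simp add: card_sing_Int)
lemma PS_9_5: "card (T n 9 \<inter> T n 5) \<le> 1" unfolding T9 T5 by (simp add: card_sing_Int)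
lemma PS_9_6: "card (T n 9 \<inter> T n 6) \<le> 1" unfolding T9 T6 by (simp add: card_sing_Int)
lemma PS_9_7: "card (T n 9 \<inter> T n 7) \<le> 1" unfolding T9 T7 by (simp add: card_sing_Int)
lemma PS_9_8: "card (T n 9 \<inter> T n 8) \<le> 1" unfolding T9 T8 by (simp add: card_sing_Int)

lemma PT_small: assumes "x < 10" "y < 10" "x \<noteq> y" shows "card (T n x \<inter> T n y) \<le> 1"
  using lt10[OF assms(1)] lt10[OF assms(2)] assms(3)
  by (elim disjE; (simp only: PS_0_1 PS_0_2 PS_0_3 PS_0_4 PS_0_5 PS_0_6 PS_0_7 PS_0_8 PS_0_9 PS_1_0 PS_1_2 PS_1_3 PS_1_4 PS_1_5 PS_1_6 PS_1_7 PS_1_8 PS_1_9 PS_2_0 PS_2_1 PS_2_3 PS_2_4 PS_2_5 PS_2_6 PS_2_7 PS_2_8 PS_2_9 PS_3_0 PS_3_1 PS_3_2 PS_3_4 PS_3_5 PS_3_6 PS_3_7 PS_3_8 PS_3_9 PS_4_0 PS_4_1 PS_4_2 PS_4_3 PS_4_5 PS_4_6 PS_4_7 PS_4_8 PS_4_9 PS_5_0 PS_5_1 PS_5_2 PS_5_3 PS_5_4 PS_5_6 PS_5_7 PS_5_8 PS_5_9 PS_6_0 PS_6_1 PS_6_2 PS_6_3 PS_6_4 PS_6_5 PS_6_7 PS_6_8 PS_6_9 PS_7_0 PS_7_1 PS_7_2 PS_7_3 PS_7_4 PS_7_5 PS_7_6 PS_7_8 PS_7_9 PS_8_0 PS_8_1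 PS_8_2 PS_8_3 PS_8_4 PS_8_5 PS_8_6 PS_8_7 PS_8_9 PS_9_0 PS_9_1 PS_9_2 PS_9_3 PS_9_4 PS_9_5 PS_9_6 PS_9_7 PS_9_8 | simp))

lemma T_fin: "finite (T n x)" by (simp add: T_def)

lemma PT_mix: assumes "x < 10" "10 \<le> y" "y < n+12" "i \<in> T n x" "i \<in> T n y" "j \<in> T n x" "j \<in> T n y"
  shows "i = j"
  using lt10[OF assms(1)]
proof (elim disjE)
  assume "x = 0" then show ?thesis using PT_mix0[of y n i j] assms by simp
next
  assume "x = 1" then show ?thesis using PT_mix1[of y n i j] assms by simp
next
  assume "x = 2" then show ?thesis using PT_mix2[of y n i j] assms by simp
next
  assume "x = 3" then show ?thesis using PT_mix3[of y n i j] assms by simp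
next
  assume "x = 4" then show ?thesis using PT_mix4[of y n i j] assms by simp
next
  assume "x = 5" then show ?thesis using PT_mix5[of y n i j] assms by simp
next
  assume "x = 6" then show ?thesis using PT_mix6[of y n i j] assms by simp
next
  assume "x = 7" then show ?thesis using PT_mix7[of y n i j] assms by simp
next
  assume "x = 8" then show ?thesis using PT_mix8[of y n i j] assms by simp
next
  assume "x = 9" then show ?thesis using PT_mix9[of y n i j] assms by simp
qed

lemma PT: assumes "x < n+12" "y < n+12" "x \<noteq> y" "i \<in> T n x" "i \<in> T n y" "j \<in> T n x" "j \<in> T n y"
  shows "i = j"
proof (cases "10 \<le> x")
  case x: True
  show ?thesis
  proof (cases "10 \<le> y")
    case True show ?thesis by (rule PT_big[OF x True assms(3-7)])
  next
    case False then show ?thesis using PT_mix[of y x n i j] x assms by simp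
  qed
next
  case x: False
  show ?thesis
  proof (cases "10 \<le> y")
    case True then show ?thesis using PT_mix[of x y n i j] x assms by simp
  next
    case False
    then have "card (T n x \<inter> T n y) \<le> Suc 0" using PT_small[of x y n] x assms(3) by simp
    then show ?thesis using assms(4-7) card_le_Suc0_iff_eq[of "T n x \<inter> T n y"] T_fin by blast
  qed
qed

lemma fv_form: assumes "i < n+12" shows "fv n i \<subseteq> {0..<n+12} \<and> card (fv n i) = 3"
  using assms
proof (cases rule: kinds)
  case 1 then show ?thesis using lt7[OF 1] by (elim disjE; simp add: fvN nb_def)
next
  case 2 then show ?thesis by (simp add: fvG)
next
  case 3 then show ?thesis by (simp add: fvW0)
next
  case 4 then show ?thesis by (simp add: fvW1)
next
  case 5 then show ?thesis by (simp add: fvW2)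
qed

lemma fvN0: "fv n 0 = {0,1,7}" by (simp add: fv_def nb_def)
lemma fvN1: "fv n 1 = {1,3,4}" by (simp add: fv_def nb_def)
lemma fvN2: "fv n 2 = {2,3,5}" by (simp add: fv_def nb_def)
lemma fvN3: "fv n 3 = {2,4,6}" by (simp add: fv_def nb_def)
lemma fvN4: "fv n 4 = {3,6,7}" by (simp add: fv_def nb_def)
lemma fvN5: "fv n 5 = {4,5,8}" by (simp add: fv_def nb_def)
lemma fvN6: "fv n 6 = {5,6,9}" by (simp add: fv_def nb_def)

definition col :: "nat \<Rightarrow> nat" where
  "col x = (if x=0 then 0 else if x=1 then 1 else if x=2 then 1 else if x=3 then 0 else if x=4 then 2
    else if x=5 then 3 else if x=6 then 4 else if x=7 then 3 else x mod 4)"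

lemma col_ge8: "8 \<le> x \<Longrightarrow> col x = x mod 4" by (simp add: col_def)
lemma col_lt5: "col x < 5"
  using mod_less_divisor[of 4 x] unfolding col_def by auto
lemma inj3: "c a \<noteq> c b \<Longrightarrow> c a \<noteq> c d \<Longrightarrow> c b \<noteq> c d \<Longrightarrow> inj_on c {a,b,d}"
  by (auto simp: inj_on_def)

lemma col_ok: assumes "4 dvd n" "i < n+12" shows "inj_on col (fv n i)"
  using assms(2)
proof (cases rule: kinds)
  case 1
  have h0: "inj_on col (fv n 0)" unfolding fvN0 by (rule inj3; simp add: col_def)
  have h1: "inj_on col (fv n 1)" unfolding fvN1 by (rule inj3; simp add: col_def)
  have h2: "inj_on col (fv n 2)" unfolding fvN2 by (rule inj3; simp add: col_def)
  have h3: "inj_on col (fv n 3)" unfolding fvN3 by (rule inj3; simp add: col_def)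
  have h4: "inj_on col (fv n 4)" unfolding fvN4 by (rule inj3; simp add: col_def)
  have h5: "inj_on col (fv n 5)" unfolding fvN5 by (rule inj3; simp add: col_def)
  have h6: "inj_on col (fv n 6)" unfolding fvN6 by (rule inj3; simp add: col_def)
  show ?thesis using lt7[OF 1] h0 h1 h2 h3 h4 h5 h6 by auto
next
  case 2
  show ?thesis
  proof (cases "i = 7")
    case True
    have "inj_on col (fv n 7)" unfolding f7 by (rule inj3; simp add: col_def)
    then show ?thesis using True by simp
  next
    case False
    then have "8 \<le> i" using 2 by simp
    then have "col i \<noteq> col (i+1)" "col i \<noteq> col (i+3)" "col (i+1) \<noteq> col (i+3)"
      by (simp_all add: col_ge8; presburger)+
    then show ?thesis unfolding fvG[OF 2] by (intro inj3)
  qed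
next
  case 3
  have "(n+9) mod 4 = 1" "(n+10) mod 4 = 2" using assms(1) by presburger+
  then show ?thesis unfolding 3 fvW0 by (intro inj3; simp add: col_ge8; simp add: col_def)
next
  case 4
  have "(n+10) mod 4 = 2" "(n+11) mod 4 = 3" using assms(1) by presburger+
  then show ?thesis unfolding 4 fvW1 by (intro inj3; simp add: col_ge8; simp add: col_def)
next
  case 5
  have "(n+11) mod 4 = 3" using assms(1) by presburger+
  then show ?thesis unfolding 5 fvW2 by (intro inj3; simp add: col_ge8; simp add: col_def)
qed

lemma conn: assumes "P1 \<noteq> {}" "P2 \<noteq> {}" "P1 \<inter> P2 = {}" "P1 \<union> P2 = {0..<n+12}"
    "\<forall>b\<in>fv n ` {0..<n+12}. b \<subseteq> P1 \<or> b \<subseteq> P2"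
  shows False
proof -
  have S: "(a \<in> P1 \<longleftrightarrow> c \<in> P1)" if "i < n+12" "a \<in> fv n i" "c \<in> fv n i" for i a c
  proof -
    have "fv n i \<subseteq> P1 \<or> fv n i \<subseteq> P2" using assms(5) that(1) by auto
    then show ?thesis using assms(3) that(2,3) by blast
  qed
  have chain: "k \<le> n+2 \<Longrightarrow> (7+k \<in> P1 \<longleftrightarrow> 7 \<in> P1)" for k
  proof (induction k)
    case 0 show ?case by simp
  next
    case (Suc k)
    have "7+k \<in> fv n (7+k)" using Suc.prems by (intro fv_self) auto
    moreover have "7+k+1 \<in> fv n (7+k)" using Suc.prems by (intro fv_succ) auto
    ultimately have "(7+k \<in> P1 \<longleftrightarrow> 7+k+1 \<in> P1)" using S[of "7+k" "7+k" "7+k+1"] Suc.prems by simp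
    then show ?case using Suc by simp
  qed
  have m9: "n+9 \<in> P1 \<longleftrightarrow> 7 \<in> P1" using chain[of "n+2"] by (simp add: add.commute)
  have m10: "n+10 \<in> P1 \<longleftrightarrow> 7 \<in> P1" using S[of "n+9" "n+9" "n+10"] m9 unfolding fvW0 by simp
  have m11: "n+11 \<in> P1 \<longleftrightarrow> 7 \<in> P1" using S[of "n+10" "n+10" "n+11"] m10 unfolding fvW1 by simp
  have m0: "0 \<in> P1 \<longleftrightarrow> 7 \<in> P1" using S[of "n+9" "n+9" 0] m9 unfolding fvW0 by simp
  have m1: "1 \<in> P1 \<longleftrightarrow> 7 \<in> P1" using S[of "n+10" "n+10" 1] m10 unfolding fvW1 by simp
  have m2: "2 \<in> P1 \<longleftrightarrow> 7 \<in> P1" using S[of "n+11" 0 2] m0 unfolding fvW2 by simp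
  have m3: "3 \<in> P1 \<longleftrightarrow> 7 \<in> P1" using S[of 1 1 3] m1 unfolding fvN1 by simp
  have m4: "4 \<in> P1 \<longleftrightarrow> 7 \<in> P1" using S[of 1 1 4] m1 unfolding fvN1 by simp
  have m5: "5 \<in> P1 \<longleftrightarrow> 7 \<in> P1" using S[of 2 2 5] m2 unfolding fvN2 by simp
  have m6: "6 \<in> P1 \<longleftrightarrow> 7 \<in> P1" using S[of 3 2 6] m2 unfolding fvN3 by simp
  have all: "x \<in> P1 \<longleftrightarrow> 7 \<in> P1" if "x < n+12" for x
  proof -
    have "x < 7 \<or> (7 \<le> x \<and> x \<le> n+9) \<or> x = n+10 \<or> x = n+11" using that by linarith
    then consider "x < 7" | "7 \<le> x" "x \<le> n+9" | "x = n+10" | "x = n+11" by blast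
    then show ?thesis
    proof cases
      case 1 show ?thesis using lt7[OF 1] by (elim disjE) (simp_all add: m0 m1[simplified] m2 m3 m4 m5 m6)
    next
      case 2 then show ?thesis using chain[of "x-7"] by simp
    next
      case 3 then show ?thesis using m10 by simp
    next
      case 4 then show ?thesis using m11 by simp
    qed
  qed
  show False
  proof (cases "7 \<in> P1")
    case True
    have "P2 \<subseteq> {0..<n+12}" using assms(4) by blast
    moreover have "z \<in> P1" if "z \<in> {0..<n+12}" for z using all[of z] that True by simp
    ultimately have "P2 \<subseteq> P1" by blast
    then show False using assms(2,3) by blast
  next
    case False
    have "P1 \<subseteq> {0..<n+12}" using assms(4) by blast
    moreover have "z \<notin> P1" if "z \<in> {0..<n+12}" for z using all[of z] that False by simp
    ultimately show False using assms(1) by blast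
  qed
qed


lemma inj_ne: "inj_on c B \<Longrightarrow> a \<in> B \<Longrightarrow> b \<in> B \<Longrightarrow> a \<noteq> b \<Longrightarrow> c a \<noteq> c b"
  by (auto simp: inj_on_def)

lemma k5: assumes "strong_colouring {0..<n+12} (fv n ` {0..<n+12}) k c" shows "5 \<le> k"
proof -
  have inj: "inj_on c (fv n i)" if "i < n+12" for i using assms that unfolding strong_colouring_def by auto
  have b1: "inj_on c {1,3,4}" using inj[of 1] unfolding fvN1 by simp
  have b2: "inj_on c {2,3,5}" using inj[of 2] unfolding fvN2 by simp
  have b3: "inj_on c {2,4,6}" using inj[of 3] unfolding fvN3 by simp
  have b4: "inj_on c {3,6,7}" using inj[of 4] unfolding fvN4 by simp
  have b5: "inj_on c {4,5,8}" using inj[of 5] unfolding fvN5 by simp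
  have b6: "inj_on c {5,6,9}" using inj[of 6] unfolding fvN6 by simp
  have "c 2 \<noteq> c 3" using inj_ne[OF b2, of 2 3] by simp
  moreover have "c 2 \<noteq> c 4" using inj_ne[OF b3, of 2 4] by simp
  moreover have "c 2 \<noteq> c 5" using inj_ne[OF b2, of 2 5] by simp
  moreover have "c 2 \<noteq> c 6" using inj_ne[OF b3, of 2 6] by simp
  moreover have "c 3 \<noteq> c 4" using inj_ne[OF b1, of 3 4] by simp
  moreover have "c 3 \<noteq> c 5" using inj_ne[OF b2, of 3 5] by simp
  moreover have "c 3 \<noteq> c 6" using inj_ne[OF b4, of 3 6] by simp
  moreover have "c 4 \<noteq> c 5" using inj_ne[OF b5, of 4 5] by simp
  moreover have "c 4 \<noteq> c 6" using inj_ne[OF b3, of 4 6] by simp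
  moreover have "c 5 \<noteq> c 6" using inj_ne[OF b6, of 5 6] by simp
  ultimately have "inj_on c {2,3,4,5,6::nat}" by (auto simp: inj_on_def)
  then have "card (c ` {2,3,4,5,6}) = 5" by (simp add: card_image)
  moreover have "c ` {2,3,4,5,6} \<subseteq> {0..<k}" using assms unfolding strong_colouring_def by auto
  ultimately show ?thesis using card_mono[of "{0..<k}" "c ` {2,3,4,5,6}"] by simp
qed

lemma two_elems: assumes "card (A::nat set) = 3" obtains x y where "x \<in> A" "y \<in> A" "x \<noteq> y"
proof -
  have "finite A" using assms card.infinite by fastforce
  then have "\<not> (\<forall>a1\<in>A. \<forall>a2\<in>A. a1 = a2)" using card_le_Suc0_iff_eq[of A] assms by simp
  then show ?thesis using that by blast
qed

lemma fv_inj: "inj_on (fv n) {0..<n+12}"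
proof (rule inj_onI)
  fix i j assume i: "i \<in> {0..<n+12}" and j: "j \<in> {0..<n+12}" and e: "fv n i = fv n j"
  obtain x y where xy: "x \<in> fv n i" "y \<in> fv n i" "x \<noteq> y"
    using fv_form[of i n] i two_elems by auto
  have x: "x < n+12" and y: "y < n+12" using fv_form[of i n] i xy by auto
  have "i \<in> T n x" "i \<in> T n y" using CH1[of i n] i xy by auto
  moreover have "j \<in> T n x" "j \<in> T n y" using CH1[of j n] j xy e by auto
  ultimately show "i = j" using PT[OF x y xy(3)] by simp
qed

lemma main_n: assumes "4 dvd n"
  shows "sym_config3 {0..<n+12} (fv n ` {0..<n+12}) (n+12) \<and> config_connected {0..<n+12} (fv n ` {0..<n+12}) \<and>
           strong_chromatic_number {0..<n+12} (fv n ` {0..<n+12}) = 5"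
proof -
  let ?P = "{0..<n+12}" and ?B = "fv n ` {0..<n+12}"
  have inj: "inj_on (fv n) ?P" by (rule fv_inj)
  have cardB: "card ?B = n+12" using card_image[OF inj] by simp
  have blocks: "\<forall>b\<in>?B. b \<subseteq> ?P \<and> card b = 3"
  proof
    fix b assume "b \<in> ?B"
    then obtain i where i: "i < n+12" "b = fv n i" by auto
    show "b \<subseteq> ?P \<and> card b = 3" using fv_form[OF i(1)] i(2) by simp
  qed
  have inc: "card {b\<in>?B. x \<in> b} = 3" if "x \<in> ?P" for x
  proof -
    have "{b\<in>?B. x \<in> b} = fv n ` {i \<in> ?P. x \<in> fv n i}" by auto
    moreover have "inj_on (fv n) {i \<in> ?P. x \<in> fv n i}" using inj by (rule inj_on_subset) auto
    ultimately have "card {b\<in>?B. x \<in> b} = card {i \<in> ?P. x \<in> fv n i}" by (simp add: card_image)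
    also have "\<dots> = 3" using T_eq[of x n] T_card[of x n] that by simp
    finally show ?thesis .
  qed
  have pair: "card {b\<in>?B. x \<in> b \<and> y \<in> b} \<le> 1" if "x \<in> ?P" "y \<in> ?P" "x \<noteq> y" for x y
  proof -
    let ?I = "{i \<in> ?P. x \<in> fv n i \<and> y \<in> fv n i}"
    have "{b\<in>?B. x \<in> b \<and> y \<in> b} = fv n ` ?I" by auto
    then have "card {b\<in>?B. x \<in> b \<and> y \<in> b} \<le> card ?I" by (simp add: card_image_le)
    moreover have "card ?I \<le> Suc 0"
    proof (subst card_le_Suc0_iff_eq)
      show "finite ?I" by simp
      show "\<forall>a1\<in>?I. \<forall>a2\<in>?I. a1 = a2"
      proof (intro ballI)
        fix i j assume i: "i \<in> ?I" and j: "j \<in> ?I"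
        have x: "x < n+12" and y: "y < n+12" using that by auto
        have "i \<in> T n x" "i \<in> T n y" using CH1[of i n] i by auto
        moreover have "j \<in> T n x" "j \<in> T n y" using CH1[of j n] j by auto
        ultimately show "i = j" using PT[OF x y that(3)] by simp
      qed
    qed
    ultimately show ?thesis by simp
  qed
  have sc: "sym_config3 ?P ?B (n+12)"
    unfolding sym_config3_def
  proof (intro conjI)
    show "finite ?P" by simp
    show "card ?P = n+12" by simp
    show "card ?B = n+12" by (rule cardB)
    show "\<forall>b\<in>?B. b \<subseteq> ?P \<and> card b = 3" by (rule blocks)
    show "\<forall>x\<in>?P. card {b\<in>?B. x \<in> b} = 3" using inc by blast
    show "\<forall>x\<in>?P. \<forall>y\<in>?P. x \<noteq> y \<longrightarrow> card {b\<in>?B. x \<in> b \<and> y \<in> b} \<le> 1" using pair by blast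
  qed
  have cc: "config_connected ?P ?B"
    unfolding config_connected_def
  proof (intro notI, elim exE conjE)
    fix P1 P2 assume h: "P1 \<noteq> {}" "P2 \<noteq> {}" "P1 \<inter> P2 = {}" "P1 \<union> P2 = ?P"
      "\<forall>b\<in>?B. b \<subseteq> P1 \<or> b \<subseteq> P2"
    show False by (rule conn[OF h])
  qed
  have col5: "strong_colouring ?P ?B 5 col"
    unfolding strong_colouring_def using col_lt5 col_ok[OF assms] by auto
  have "strong_chromatic_number ?P ?B = 5"
    unfolding strong_chromatic_number_def
  proof (rule Least_equality)
    show "\<exists>c. strong_colouring ?P ?B 5 c" using col5 by blast
    show "\<And>k. \<exists>c. strong_colouring ?P ?B k c \<Longrightarrow> 5 \<le> k" using k5 by blast
  qed
  then show ?thesis using sc cc by simp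
qed

theorem mainTheorem19:
  fixes v :: nat
  assumes "v mod 4 = 0" and "v \<ge> 12"
  shows "\<exists>(P :: nat set) (B :: nat set set).
           sym_config3 P B v \<and> config_connected P B \<and>
           strong_chromatic_number P B = 5"
proof -
  define n where "n = v - 12"
  have v: "v = n + 12" using assms(2) n_def by simp
  have "4 dvd n" using assms(1) v by presburger
  then show ?thesis unfolding v by (intro exI) (rule main_n)
qed

end
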